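(* For every integer $s\ge1$, $$\sum_{n=1}^{s}\frac{E_{2n}}{2^{2n}}\,t(2s,2n)=t(2s+1,1)=\frac{(2s)!}{2^{2s}}\binom{-1/2}{s}=(-1)^s\Big(\frac{1\cdot3\cdots(2s-1)}{2^s}\Big)^2 .$$ Equivalently, $\operatorname{sech}(D/2)\,0^{[2s]}=D\,0^{[2s+1]}$.
   Context: $E_{2n}$ are the Euler numbers: $\operatorname{sech}x=\sum_{n\ge0}E_{2n}x^{2n}/(2n)!$. Central factorials: $x^{[0]}=1$, $x^{[n]}=x\prod_{j=1}^{n-1}(x+\tfrac n2-j)$ for $n\ge1$; $t(n,k)$ is defined by $x^{[n]}=\sum_k t(n,k)x^k$. For a power series $h(D)=\sum_k h_kD^k$, $h(D)\,0^{[n]}:=\sum_k h_k\,k!\,t(n,k)$. *)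

theory Defs
  imports Complex_Main "HOL-Computational_Algebra.Formal_Power_Series"
    "HOL-Computational_Algebra.Polynomial"
begin

definition fps_cosh :: "real \<Rightarrow> real fps" where
  "fps_cosh c = Abs_fps (\<lambda>n. if even n then c ^ n / fact n else 0)"

definition fps_sech :: "real fps" where
  "fps_sech = inverse (fps_cosh 1)"

definition euler_number :: "nat \<Rightarrow> real" where
  "euler_number m = fact m * fps_nth fps_sech m"

definition central_fact_poly :: "nat \<Rightarrow> real poly" where
  "central_fact_poly n = (if n = 0 then 1
     else [:0, 1:] * (\<Prod>j = 1..n - 1. [: real n / 2 - real j, 1 :]))"

definition central_t :: "nat \<Rightarrow> nat \<Rightarrow> real" where
  "central_t n k = coeff (central_fact_poly n) k"

text \<open>h(D) 0^[n] := sum_k h_k k! t(n,k)  (t(n,k) = 0 for k > n, so the sum is finite).\<close>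
definition apply_at_zero :: "real fps \<Rightarrow> nat \<Rightarrow> real" where
  "apply_at_zero h n = (\<Sum>k\<le>n. fps_nth h k * fact k * central_t n k)"

end

theory Submission
  imports Defs
begin


definition pA :: "nat \<Rightarrow> real poly" where "pA m = (\<Prod>i=1..m. [:real i, 1:])"
definition pB :: "nat \<Rightarrow> real poly" where "pB m = (\<Prod>i=1..m. [:- real i, 1:])"
definition pu :: "nat \<Rightarrow> real poly" where "pu s = (\<Prod>i=1..s. [: - (((2*real i - 1)/2)^2), 0, 1:])"

lemma cfp_even:
  "central_fact_poly (2*Suc m) = [:0,1:] * pA m * [:0,1:] * pB m"
proof -
  let ?f = "\<lambda>j. [: real (2*Suc m) / 2 - real j, 1 :]"
  have split: "{1..2*Suc m - 1} = {1..m} \<union> {Suc m} \<union> {m+2..2*m+1}" by auto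
  have p: "prod ?f {1..2*Suc m - 1} = prod ?f {1..m} * ?f (Suc m) * prod ?f {m+2..2*m+1}"
    unfolding split by (subst prod.union_disjoint; auto)+
  have 1: "prod ?f {1..m} = pA m" unfolding pA_def
    by (rule prod.reindex_bij_witness[of _ "\<lambda>i. Suc m - i" "\<lambda>j. Suc m - j"]) (auto simp: of_nat_diff)
  have 2: "prod ?f {m+2..2*m+1} = pB m" unfolding pB_def
    by (rule prod.reindex_bij_witness[of _ "\<lambda>i. i + Suc m" "\<lambda>j. j - Suc m"]) (auto simp: of_nat_diff)
  have 3: "?f (Suc m) = [:0,1:]" by simp
  have "central_fact_poly (2*Suc m) = [:0,1:] * prod ?f {1..2*Suc m - 1}"
    unfolding central_fact_poly_def by (simp only: if_False nat.simps mult_0_right Suc_neq_Zero mult_Suc_right) simp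
  also have "\<dots> = [:0,1:] * pA m * [:0,1:] * pB m" unfolding p 1 2 3 by (simp only: mult_ac)
  finally show ?thesis .
qed

lemma cfp_odd:
  "central_fact_poly (2*s+1) = [:0,1:] * pu s"
proof -
  let ?f = "\<lambda>j. [: real (2*s+1) / 2 - real j, 1 :]"
  have split: "{1..2*s+1 - 1} = {1..s} \<union> {s+1..2*s}" by auto
  have p: "prod ?f {1..2*s+1 - 1} = prod ?f {1..s} * prod ?f {s+1..2*s}"
    unfolding split by (subst prod.union_disjoint; auto)+
  have 1: "prod ?f {1..s} = (\<Prod>i=1..s. [: real i - 1/2, 1:])"
    by (rule prod.reindex_bij_witness[of _ "\<lambda>i. Suc s - i" "\<lambda>j. Suc s - j"]) (auto simp: of_nat_diff field_simps)
  have 2: "prod ?f {s+1..2*s} = (\<Prod>i=1..s. [: 1/2 - real i, 1:])"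
    by (rule prod.reindex_bij_witness[of _ "\<lambda>i. i + s" "\<lambda>j. j - s"]) (auto simp: of_nat_diff field_simps)
  have 3: "(\<Prod>i=1..s. [: real i - 1/2, 1:]) * (\<Prod>i=1..s. [: 1/2 - real i, 1:]) = pu s"
    unfolding pu_def prod.distrib[symmetric]
  proof (rule prod.cong)
    fix i assume "i \<in> {1..s}"
    have c: "(real i - 1/2) * (1/2 - real i) = - (((2*real i - 1)/2)^2)" by (simp add: power2_eq_square field_simps)
    show "[: real i - 1/2, 1:] * [: 1/2 - real i, 1:] = [: - (((2*real i - 1)/2)^2), 0, 1:]"
      by (simp add: c[symmetric] algebra_simps power2_eq_square field_simps)
  qed simp
  have "central_fact_poly (2*s+1) = [:0,1:] * prod ?f {1..2*s+1 - 1}"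
    unfolding central_fact_poly_def by simp
  also have "\<dots> = [:0,1:] * pu s" unfolding p 1 2 3 ..
  finally show ?thesis .
qed

lemma prod_shift1: "(\<Prod>i=1..Suc m. (f::nat\<Rightarrow>real poly) i) = f (Suc m) * (\<Prod>i=1..m. f i)"
  by (simp add: prod.cl_ivl_Suc)
lemma prod_shift0: "(\<Prod>i=1..Suc m. (f::nat\<Rightarrow>real poly) i) = f 1 * (\<Prod>i=1..m. f (Suc i))"
  by (induction m) (simp_all add: prod.cl_ivl_Suc mult_ac)

lemma pu_shift:
  "pcompose (pu (Suc m)) [:1/2,1:] + pcompose (pu (Suc m)) [:-1/2,1:] = smult 2 ([:0,1:]*pA m*[:0,1:]*pB m)"
proof -
  have f1: "pcompose [: - (((2*real i - 1)/2)^2), 0, 1:] [:1/2,1:] = [:real i,1:] * [:1 - real i, 1:]" for i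
    by (rule poly_ext) (simp add: poly_pcompose power2_eq_square field_simps)
  have f2: "pcompose [: - (((2*real i - 1)/2)^2), 0, 1:] [:-1/2,1:] = [:-real i,1:] * [:real i - 1, 1:]" for i
    by (rule poly_ext) (simp add: poly_pcompose power2_eq_square field_simps)
  have a1: "(\<Prod>i=1..Suc m. [:real i,1:]) = [:real (Suc m), 1:] * pA m"
    unfolding pA_def by (rule prod_shift1)
  have a2: "(\<Prod>i=1..Suc m. [:1 - real i,1:]) = [:0,1:] * pB m"
    unfolding pB_def by (subst prod_shift0) simp
  have b1: "(\<Prod>i=1..Suc m. [:-real i,1:]) = [:- real (Suc m), 1:] * pB m"
    unfolding pB_def by (rule prod_shift1)
  have b2: "(\<Prod>i=1..Suc m. [:real i - 1,1:]) = [:0,1:] * pA m"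
    unfolding pA_def by (subst prod_shift0) simp
  have "pcompose (pu (Suc m)) [:1/2,1:] = ([:real (Suc m), 1:] * pA m) * ([:0,1:] * pB m)"
    unfolding pu_def pcompose_prod f1 prod.distrib a1 a2 ..
  moreover have "pcompose (pu (Suc m)) [:-1/2,1:] = ([:- real (Suc m), 1:] * pB m) * ([:0,1:] * pA m)"
    unfolding pu_def pcompose_prod f2 prod.distrib b1 b2 ..
  moreover have "[:real (Suc m), 1:] + [:- real (Suc m), 1:] = [:0,2:]" by simp
  moreover have "smult 2 ([:0,1:]*pA m*[:0,1:]*pB m) = [:0,2:] * ([:0,1:]*pA m*pB m)"
    by (simp add: mult_ac)
  moreover have "([:real (Suc m), 1:] * pA m) * ([:0,1:] * pB m) + ([:- real (Suc m), 1:] * pB m) * ([:0,1:] * pA m)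
     = ([:real (Suc m), 1:] + [:- real (Suc m), 1:]) * ([:0,1:]*pA m*pB m)"
    by (simp only: distrib_right distrib_left mult_ac)
  ultimately show ?thesis by simp
qed



definition Lop :: "nat \<Rightarrow> real fps \<Rightarrow> real poly \<Rightarrow> real" where
  "Lop N h p = (\<Sum>k\<le>N. fps_nth h k * fact k * coeff p k)"
definition Ex :: "real \<Rightarrow> real fps" where "Ex c = Abs_fps (\<lambda>n. c^n / fact n)"

lemma Lop_add: "Lop N h (p + q) = Lop N h p + Lop N h q"
  by (simp add: Lop_def algebra_simps sum.distrib)
lemma Lop_smult: "Lop N h (smult a p) = a * Lop N h p"
  by (simp add: Lop_def sum_distrib_left mult_ac)
lemma Lop_0[simp]: "Lop N h 0 = 0" by (simp add: Lop_def)
lemma Lop_sum: "Lop N h (\<Sum>j\<in>A. f j) = (\<Sum>j\<in>A. Lop N h (f j))"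
  by (induction A rule: infinite_finite_induct) (simp_all add: Lop_add)
lemma Lop_hadd: "Lop N (h + g) p = Lop N h p + Lop N g p"
  by (simp add: Lop_def algebra_simps sum.distrib)
lemma Lop_hconst: "Lop N (fps_const c * h) p = c * Lop N h p"
  by (simp add: Lop_def sum_distrib_left mult_ac)

lemma pcompose_monom': "pcompose (monom a j) q = smult a (q ^ j)"
  by (induction j) (simp_all add: monom_0 monom_Suc pcompose_pCons)

lemma lin_eq: "[:c,1:] = monom 1 1 + [:c::real:]"
  by (simp add: poly_eq_iff coeff_monom coeff_pCons split: nat.split)

lemma coeff_lin_pow: "coeff ([:c::real,1:] ^ j) k = of_nat (j choose k) * c ^ (j - k)"
proof -
  have "[:c,1:] ^ j = (\<Sum>i\<le>j. of_nat (j choose i) * monom 1 1 ^ i * [:c:] ^ (j - i))"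
    unfolding lin_eq by (rule binomial_ring)
  also have "\<dots> = (\<Sum>i\<le>j. monom (of_nat (j choose i) * c ^ (j - i)) i)"
    by (rule sum.cong) (simp_all add: monom_power of_nat_poly smult_monom[symmetric] poly_const_pow monom_0[symmetric] mult_monom)
  finally show ?thesis by (simp add: coeff_sum coeff_monom)
qed

lemma Lop_monom: "j \<le> N \<Longrightarrow> Lop N g (monom a j) = a * fps_nth g j * fact j"
proof -
  assume j: "j \<le> N"
  have "Lop N g (monom a j) = (\<Sum>k\<le>N. if k = j then fps_nth g j * fact j * a else 0)"
    unfolding Lop_def by (rule sum.cong) (auto simp: coeff_monom)
  also have "\<dots> = a * fps_nth g j * fact j" using j by (simp add: sum.delta)
  finally show ?thesis .
qed

lemma Lop_linpow: "j \<le> N \<Longrightarrow> Lop N h ([:c,1:]^j) = fps_nth (h * Ex c) j * fact j"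
proof -
  assume j: "j \<le> N"
  have "Lop N h ([:c,1:]^j) = (\<Sum>k\<le>N. fps_nth h k * fact k * (of_nat (j choose k) * c ^ (j - k)))"
    unfolding Lop_def coeff_lin_pow ..
  also have "\<dots> = (\<Sum>k\<le>j. fps_nth h k * fact k * (of_nat (j choose k) * c ^ (j - k)))"
    by (rule sum.mono_neutral_right) (use j in auto)
  also have "\<dots> = (\<Sum>k\<le>j. fact j * (fps_nth h k * (c ^ (j - k) / fact (j - k))))"
    by (rule sum.cong) (auto simp: binomial_fact field_simps)
  also have "\<dots> = fps_nth (h * Ex c) j * fact j"
    by (simp add: fps_mult_nth Ex_def sum_distrib_left atLeast0AtMost mult_ac)
  finally show ?thesis .
qed

lemma Lop_shift:
  assumes "degree p \<le> N"
  shows "Lop N h (pcompose p [:c,1:]) = Lop N (h * Ex c) p"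
proof -
  have pe: "p = (\<Sum>j\<le>N. monom (coeff p j) j)" using poly_as_sum_of_monoms'[OF assms] by simp
  have "Lop N h (pcompose p [:c,1:]) = (\<Sum>j\<le>N. Lop N h (smult (coeff p j) ([:c,1:]^j)))"
    by (subst pe) (simp add: pcompose_sum pcompose_monom' Lop_sum)
  also have "\<dots> = (\<Sum>j\<le>N. Lop N (h * Ex c) (monom (coeff p j) j))"
    by (rule sum.cong) (simp_all add: Lop_smult Lop_linpow Lop_monom)
  also have "\<dots> = Lop N (h * Ex c) p"
    by (subst (2) pe) (simp add: Lop_sum)
  finally show ?thesis .
qed



lemma cosh_half: "fps_cosh (1/2) = fps_const (1/2) * (Ex (1/2) + Ex (-1/2))"
proof (rule fps_ext)
  fix n
  have m: "(-1/2::real)^n = (-1)^n * (1/2)^n" by (simp add: power_minus[symmetric])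
  show "fps_nth (fps_cosh (1/2)) n = fps_nth (fps_const (1/2) * (Ex (1/2) + Ex (-1/2))) n"
    unfolding fps_cosh_def Ex_def fps_mult_left_const_nth fps_add_nth fps_nth_Abs_fps m
    by (cases "even n") (simp_all add: add_divide_distrib[symmetric])
qed

lemma cosh0: "fps_nth (fps_cosh c) 0 = 1" by (simp add: fps_cosh_def)

lemma degree_pu: "degree (pu s) \<le> 2*s"
proof -
  have "degree (pu s) \<le> sum (degree \<circ> (\<lambda>i. [: - (((2*real i - 1)/2)^2), 0, 1:])) {1..s}"
    unfolding pu_def by (rule degree_prod_sum_le) simp
  also have "\<dots> = 2*s" by simp
  finally show ?thesis .
qed

lemma coeff_pu0: "coeff (pu s) 0 = (\<Prod>i=1..s. - (((2*real i - 1)/2)^2))"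
  unfolding poly_0_coeff_0[symmetric] pu_def by (simp add: poly_prod)

lemma key:
  "apply_at_zero (inverse (fps_cosh (1/2))) (2*Suc m) = coeff (pu (Suc m)) 0"
proof -
  let ?h = "inverse (fps_cosh (1/2))"
  let ?u = "pu (Suc m)"
  let ?N = "2*Suc m"
  have cf: "central_fact_poly ?N = smult (1/2) (pcompose ?u [:1/2,1:] + pcompose ?u [:-1/2,1:])"
    unfolding cfp_even pu_shift by simp
  have du: "degree ?u \<le> ?N" by (rule degree_pu)
  have "apply_at_zero ?h ?N = Lop ?N ?h (central_fact_poly ?N)"
    by (simp add: apply_at_zero_def Lop_def central_t_def)
  also have "\<dots> = 1/2 * (Lop ?N (?h * Ex (1/2)) ?u + Lop ?N (?h * Ex (-1/2)) ?u)"
    unfolding cf Lop_smult Lop_add Lop_shift[OF du] ..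
  also have "\<dots> = Lop ?N (fps_const (1/2) * (?h * Ex (1/2) + ?h * Ex (-1/2))) ?u"
    by (simp add: Lop_hconst Lop_hadd)
  also have "fps_const (1/2) * (?h * Ex (1/2) + ?h * Ex (-1/2)) = ?h * fps_cosh (1/2)"
    by (simp add: cosh_half algebra_simps)
  also have "\<dots> = 1" by (rule inverse_mult_eq_1) (simp add: cosh0)
  also have "Lop ?N 1 ?u = (\<Sum>k\<le>?N. if k = 0 then coeff ?u 0 else 0)"
    unfolding Lop_def by (rule sum.cong) auto
  also have "\<dots> = coeff ?u 0" by (simp only: sum.delta finite_atMost) simp
  finally show ?thesis .
qed

lemma ct_odd: "central_t (2*s+1) 1 = coeff (pu s) 0"
  unfolding central_t_def cfp_odd by simp

lemma fact_double: "fact (2*s) = (2::real)^s * fact s * (\<Prod>i = 1..s. real (2*i - 1))"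
proof (induction s)
  case 0 then show ?case by simp
next
  case (Suc s)
  have e: "real (2 * Suc s - 1) = 2 * real s + 1" by (simp add: of_nat_diff)
  have f: "2 * Suc s = Suc (Suc (2*s))" by simp
  have "fact (2 * Suc s) = (2 * real s + 2) * (2 * real s + 1) * (fact (2*s) :: real)"
    unfolding f by (simp add: algebra_simps)
  also have "\<dots> = (2 * real s + 2) * (2 * real s + 1) * ((2::real)^s * fact s * (\<Prod>i = 1..s. real (2*i - 1)))"
    using Suc by simp
  also have "\<dots> = (2::real)^Suc s * fact (Suc s) * (\<Prod>i = 1..Suc s. real (2*i - 1))"
    by (simp add: prod.cl_ivl_Suc e algebra_simps)
  finally show ?case .
qed

lemma poch_half: "pochhammer (1/2::real) s = (\<Prod>i = 1..s. real (2*i - 1)) / 2^s"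
proof (induction s)
  case 0 then show ?case by simp
next
  case (Suc s)
  have e: "real (2 * Suc s - 1) = 2 * real s + 1" by (simp add: of_nat_diff)
  show ?case by (simp add: pochhammer_Suc prod.cl_ivl_Suc Suc e field_simps)
qed



lemma prod_form': "(\<Prod>i=1..s. - (((2*real i - 1)/2)^2)) = (-1)^s * ((\<Prod>i = 1..s. real (2*i - 1)) / 2^s)^2"
proof (induction s)
  case 0 then show ?case by simp
next
  case (Suc s)
  have e: "real (2 * Suc s - 1) = 2 * real (Suc s) - 1" by (simp add: of_nat_diff)
  have "(\<Prod>i=1..Suc s. - (((2*real i - 1)/2)^2)) = (\<Prod>i=1..s. - (((2*real i - 1)/2)^2)) * (- (((2*real (Suc s) - 1)/2)^2))"
    by (simp add: prod.cl_ivl_Suc)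
  also have "\<dots> = (-1)^s * ((\<Prod>i = 1..s. real (2*i - 1)) / 2^s)^2 * (- (((2*real (Suc s) - 1)/2)^2))"
    using Suc by simp
  also have "\<dots> = (-1)^Suc s * (((\<Prod>i = 1..s. real (2*i - 1)) * (2*real (Suc s) - 1)) / 2^Suc s)^2"
    by (simp only: power_Suc power_mult_distrib power_divide) simp
  also have "\<dots> = (-1)^Suc s * ((\<Prod>i = 1..Suc s. real (2*i - 1)) / 2^Suc s)^2"
    by (simp only: prod.cl_ivl_Suc e) simp
  finally show ?case .
qed

lemma gch': "fact (2*s) / 2^(2*s) * ((-1/2 :: real) gchoose s)
         = (-1)^s * ((\<Prod>i = 1..s. real (2*i - 1)) / 2^s)^2"
proof -
  let ?P = "\<Prod>i = 1..s. real (2*i - 1)"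
  have g: "((-1/2 :: real) gchoose s) = (-1)^s * (?P / 2^s) / fact s"
  proof -
    have "pochhammer (- (-1/2::real)) s = ?P/2^s" using poch_half[of s] by simp
    then show ?thesis unfolding gbinomial_pochhammer by simp
  qed
  have f: "(2::real)^(2*s) = 2^s * 2^s" by (simp add: power_add[symmetric] mult_2)
  show ?thesis unfolding g fact_double f
    by (simp add: power2_eq_square)
qed



lemma h_nth: "fps_nth (inverse (fps_cosh (1/2))) k = fps_nth fps_sech k / 2^k"
proof -
  define h' where "h' = Abs_fps (\<lambda>k. fps_nth fps_sech k / 2^k)"
  have cs: "fps_cosh 1 * fps_sech = 1" unfolding fps_sech_def
    by (rule inverse_mult_eq_1') (simp add: cosh0)
  have c2: "fps_nth (fps_cosh (1/2)) i = fps_nth (fps_cosh 1) i / 2^i" for i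
    by (simp add: fps_cosh_def power_divide)
  have "fps_cosh (1/2) * h' = 1"
  proof (rule fps_ext)
    fix n
    have "fps_nth (fps_cosh (1/2) * h') n = (\<Sum>i=0..n. fps_nth (fps_cosh 1) i * fps_nth fps_sech (n - i) / 2^n)"
      unfolding fps_mult_nth h'_def c2 fps_nth_Abs_fps
    proof (rule sum.cong)
      fix i assume "i \<in> {0..n}"
      then have "(2::real)^i * 2^(n-i) = 2^n" by (simp add: power_add[symmetric])
      then show "fps_nth (fps_cosh 1) i / 2 ^ i * (fps_nth fps_sech (n - i) / 2 ^ (n - i)) =
        fps_nth (fps_cosh 1) i * fps_nth fps_sech (n - i) / 2 ^ n" by (simp add: field_simps)
    qed simp
    also have "\<dots> = fps_nth (fps_cosh 1 * fps_sech) n / 2^n"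
      by (simp add: fps_mult_nth sum_divide_distrib)
    also have "\<dots> = fps_nth 1 n" unfolding cs by simp
    finally show "fps_nth (fps_cosh (1/2) * h') n = fps_nth 1 n" .
  qed
  then have "inverse (fps_cosh (1/2)) = h'" by (rule fps_inverse_unique)
  then show ?thesis by (simp add: h'_def)
qed

lemma h_odd: "odd k \<Longrightarrow> fps_nth (inverse (fps_cosh c)) k = 0"
proof -
  assume k: "odd k"
  define h where "h = inverse (fps_cosh c)"
  define b where "b = Abs_fps (\<lambda>n. if even n then fps_nth h n else 0)"
  have ch: "fps_cosh c * h = 1" unfolding h_def
    by (rule inverse_mult_eq_1') (simp add: cosh0)
  have "fps_cosh c * b = 1"
  proof (rule fps_ext)
    fix n
    have "fps_nth (fps_cosh c * b) n = (\<Sum>i=0..n. if even n then fps_nth (fps_cosh c) i * fps_nth h (n - i) else 0)"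
      unfolding fps_mult_nth
    proof (rule sum.cong)
      fix i assume "i \<in> {0..n}"
      then show "fps_nth (fps_cosh c) i * fps_nth b (n - i) = (if even n then fps_nth (fps_cosh c) i * fps_nth h (n - i) else 0)"
        by (cases "even i") (auto simp: b_def fps_cosh_def)
    qed simp
    also have "\<dots> = (if even n then fps_nth (fps_cosh c * h) n else 0)"
      by (simp add: fps_mult_nth)
    also have "\<dots> = fps_nth 1 n" unfolding ch by auto
    finally show "fps_nth (fps_cosh c * b) n = fps_nth 1 n" .
  qed
  then have "h = b" unfolding h_def by (rule fps_inverse_unique)
  then show ?thesis using k by (simp add: h_def b_def)
qed

lemma sum_even: fixes s :: nat and f :: "nat \<Rightarrow> real" shows "(\<And>k. odd k \<Longrightarrow> f k = 0) \<Longrightarrow> f 0 = (0::real) \<Longrightarrow> (\<Sum>k\<le>2*s. f k) = (\<Sum>n=1..s. f (2*n))"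
proof (induction s)
  case 0 then show ?case by simp
next
  case (Suc s)
  have e: "2 * Suc s = Suc (Suc (2*s))" by simp
  have "(\<Sum>k\<le>2*Suc s. f k) = (\<Sum>k\<le>2*s. f k) + f (Suc (2*s)) + f (2*Suc s)"
    unfolding e by simp
  also have "\<dots> = (\<Sum>n=1..s. f (2*n)) + f (2*Suc s)" using Suc by simp
  also have "\<dots> = (\<Sum>n=1..Suc s. f (2*n))" by (simp add: sum.cl_ivl_Suc)
  finally show ?case .
qed

theorem mainTheorem6:
  fixes s :: nat
  assumes "s \<ge> 1"
  shows "(\<Sum>n = 1..s. euler_number (2*n) / 2^(2*n) * central_t (2*s) (2*n)) = central_t (2*s+1) 1
     \<and> central_t (2*s+1) 1 = fact (2*s) / 2^(2*s) * ((-1/2 :: real) gchoose s)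
     \<and> fact (2*s) / 2^(2*s) * ((-1/2 :: real) gchoose s)
         = (-1)^s * ((\<Prod>i = 1..s. real (2*i - 1)) / 2^s)^2
     \<and> apply_at_zero (inverse (fps_cosh (1/2))) (2*s) = apply_at_zero fps_X (2*s+1)"
proof -
  obtain m where sm: "s = Suc m" using assms by (cases s) auto
  let ?h = "inverse (fps_cosh (1/2))"
  have A: "apply_at_zero ?h (2*s) = coeff (pu s) 0" using key[of m] sm by simp
  have X: "apply_at_zero fps_X (2*s+1) = central_t (2*s+1) 1"
  proof -
    have "apply_at_zero fps_X (2*s+1) = (\<Sum>k\<le>2*s+1. if k = 1 then central_t (2*s+1) 1 else 0)"
      unfolding apply_at_zero_def by (rule sum.cong) auto
    also have "\<dots> = central_t (2*s+1) 1" by (simp only: sum.delta finite_atMost) simp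
    finally show ?thesis .
  qed
  have T: "central_t (2*s+1) 1 = coeff (pu s) 0" by (rule ct_odd)
  have G: "fact (2*s) / 2^(2*s) * ((-1/2 :: real) gchoose s)
         = (-1)^s * ((\<Prod>i = 1..s. real (2*i - 1)) / 2^s)^2" by (rule gch')
  have P: "coeff (pu s) 0 = (-1)^s * ((\<Prod>i = 1..s. real (2*i - 1)) / 2^s)^2"
    unfolding coeff_pu0 by (rule prod_form')
  define f where "f k = fps_nth ?h k * fact k * central_t (2*s) k" for k
  have f0: "f 0 = 0"
    by (simp add: f_def central_t_def sm cfp_even coeff_mult_0 del: mult_Suc_right)
  have fo: "f k = 0" if "odd k" for k using h_odd[OF that] by (simp add: f_def)
  have S: "(\<Sum>n = 1..s. euler_number (2*n) / 2^(2*n) * central_t (2*s) (2*n)) = (\<Sum>n=1..s. f (2*n))"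
    by (rule sum.cong) (simp_all add: f_def euler_number_def h_nth)
  also have "\<dots> = (\<Sum>k\<le>2*s. f k)" using sum_even[of f s, OF fo f0] by simp
  also have "\<dots> = apply_at_zero ?h (2*s)" by (simp add: f_def apply_at_zero_def)
  finally have S1: "(\<Sum>n = 1..s. euler_number (2*n) / 2^(2*n) * central_t (2*s) (2*n)) = apply_at_zero ?h (2*s)" .
  show ?thesis using S1 A X T G P by simp
qed


end
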